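(* Let $V$ be a finite dimensional real vector space, let $G$ be an abelian subgroup of $GL(V)$ and let $x\in V$ be a point with a somewhere dense $G$-orbit, i.e. the closure of $G(x)=\{gx: g\in G\}$ contains a non-empty open subset of $V$. Then the isotropy group $G_y=\{g\in G: gy=y\}$ is trivial for every point $y\in G(x)$. *)

theory Defs
  imports "HOL-Analysis.Analysis"
begin

definition GL :: "('a::real_vector \<Rightarrow> 'a) set" where
  "GL = {f. linear f \<and> bij f}"

definition subgroup_GL :: "('a::real_vector \<Rightarrow> 'a) set \<Rightarrow> bool" where
  "subgroup_GL G \<longleftrightarrow> G \<subseteq> GL \<and> id \<in> G \<and> (\<forall>f\<in>G. \<forall>g\<in>G. f \<circ> g \<in> G) \<and> (\<forall>f\<in>G. inv f \<in> G)"

definition abelian_subgroup_GL :: "('a::real_vector \<Rightarrow> 'a) set \<Rightarrow> bool" where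
  "abelian_subgroup_GL G \<longleftrightarrow> subgroup_GL G \<and> (\<forall>f\<in>G. \<forall>g\<in>G. f \<circ> g = g \<circ> f)"

definition orbit :: "('a \<Rightarrow> 'a) set \<Rightarrow> 'a \<Rightarrow> 'a set" where
  "orbit G x = (\<lambda>g. g x) ` G"

definition isotropy :: "('a \<Rightarrow> 'a) set \<Rightarrow> 'a \<Rightarrow> ('a \<Rightarrow> 'a) set" where
  "isotropy G y = {g \<in> G. g y = y}"

end

theory Submission
  imports Defs
begin

lemma linear_zero_on_open:
  fixes f :: "'a::euclidean_space \<Rightarrow> 'b::real_vector"
  assumes "linear f" "open U" "U \<noteq> {}" "\<forall>z\<in>U. f z = 0"
  shows "f v = 0"
proof -
  obtain u where u: "u \<in> U" using assms(3) by blast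
  then obtain e where e: "e > 0" "ball u e \<subseteq> U" using assms(2) open_contains_ball by blast
  define t where "t = e / (2 * (norm v + 1))"
  have "norm v \<ge> 0" by simp
  have nv: "norm v + 1 > 0" by (rule add_nonneg_pos) (simp_all)
  hence "2 * (norm v + 1) > (0::real)" by simp
  hence t: "t > 0" using e unfolding t_def by simp
  have "t > 0" using e unfolding t_def by (intro divide_pos_pos) (auto simp: add_pos_nonneg norm_ge_zero add_nonneg_pos)
  have "norm (t *\<^sub>R v) < e"
  proof -
    have "norm (t *\<^sub>R v) = t * norm v" using t by simp
    also have "\<dots> < t * (norm v + 1)" using t by simp
    also have "\<dots> = e / 2" unfolding t_def using nv by (simp add: field_simps)
    finally show ?thesis using e by simp
  qed
  hence "u + t *\<^sub>R v \<in> ball u e" by (simp add: dist_norm)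
  hence "f (u + t *\<^sub>R v) = 0" using e assms(4) by blast
  moreover have "f u = 0" using u assms(4) by blast
  ultimately have "t *\<^sub>R f v = 0" using assms(1) by (simp add: linear_add linear_scale)
  thus ?thesis using t by simp
qed

theorem mainTheorem8:
  fixes G :: "('a::euclidean_space \<Rightarrow> 'a) set" and x :: 'a
  assumes "abelian_subgroup_GL G"
    and "\<exists>U. open U \<and> U \<noteq> {} \<and> U \<subseteq> closure (orbit G x)"
  shows "\<forall>y\<in>orbit G x. isotropy G y = {id}"
proof
  fix y assume "y \<in> orbit G x"
  then obtain h where h: "h \<in> G" "y = h x" unfolding orbit_def by blast
  have sub: "G \<subseteq> GL" "id \<in> G" "\<forall>f\<in>G. \<forall>g\<in>G. f \<circ> g \<in> G" "\<forall>f\<in>G. inv f \<in> G"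
    and comm: "\<forall>f\<in>G. \<forall>g\<in>G. f \<circ> g = g \<circ> f"
    using assms(1) unfolding abelian_subgroup_GL_def subgroup_GL_def by auto
  obtain U where U: "open U" "U \<noteq> {}" "U \<subseteq> closure (orbit G x)" using assms(2) by blast
  show "isotropy G y = {id}"
  proof (rule set_eqI, rule iffI)
    fix g assume "g \<in> isotropy G y"
    hence g: "g \<in> G" "g (h x) = h x" using h unfolding isotropy_def by auto
    have lg: "linear g" using g sub(1) unfolding GL_def by auto
    have bh: "bij h" using h sub(1) unfolding GL_def by auto
    have fix_orb: "orbit G x \<subseteq> {z. g z = z}"
    proof
      fix z assume "z \<in> orbit G x"
      then obtain k where k: "k \<in> G" "z = k x" unfolding orbit_def by blast
      define m where "m = k \<circ> inv h"
      have m: "m \<in> G" using k h sub unfolding m_def by auto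
      have mh: "m (h x) = k x" unfolding m_def using bh by (simp add: bij_is_inj inv_f_f)
      have "g (m (h x)) = m (g (h x))" using comm m g(1) by (metis comp_apply)
      thus "z \<in> {z. g z = z}" using mh g(2) k by simp
    qed
    have "continuous_on UNIV g" using lg by (simp add: linear_continuous_on linear_conv_bounded_linear)
    hence "closed {z. g z = z}" by (intro closed_Collect_eq) (auto intro: continuous_intros)
    hence "closure (orbit G x) \<subseteq> {z. g z = z}" using fix_orb closure_minimal by blast
    hence zU: "\<forall>z\<in>U. g z - z = 0" using U by auto
    have lf: "linear (\<lambda>z. g z - z)" using lg by (intro linear_compose_sub linear_id[unfolded id_def]) 
    have "\<And>v. g v - v = 0" using linear_zero_on_open[OF lf U(1) U(2) zU] .
    hence "g = id" by (auto simp: fun_eq_iff)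
    thus "g \<in> {id}" by simp
  next
    fix g :: "'a \<Rightarrow> 'a" assume "g \<in> {id}"
    thus "g \<in> isotropy G y" using sub(2) unfolding isotropy_def by simp
  qed
qed

end
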